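(* Assume the setting, hypotheses and Rothe scheme described in the context, and for every sufficiently small $\tau=T/N$ let $\{u_\tau^n\}_{n=1}^N$, $\{\xi_\tau^n\}_{n=1}^N$ be a solution of Problem $\mathcal P_\tau$. Then $u_\tau^1-u_\tau^0\to0$ strongly in $H$ as $\tau\to0$.
   Context: $V$ is a real reflexive separable Banach space with norm $\|\cdot\|$, $H$ is a real separable Hilbert space with inner product $(\cdot,\cdot)$ and norm $|\cdot|$, identified with its dual, and $V\subset H\subset V^*$ with dense continuous embeddings, the embedding $V\subset H$ being compact; $\langle\cdot,\cdot\rangle$ is the $V^*\times V$ duality pairing, with $\langle u,v\rangle=(u,v)$ for $u\in H$, $v\in V$. $U$ is a reflexive Banach space, $T>0$. For locally Lipschitz $J\colon U\to\mathbb R$, $J^0(x;v)=\limsup_{y\to x,\lambda\downarrow0}\frac{J(y+\lambda v)-J(y)}{\lambda}$ and $\partial J(x)=\{\xi\in U^*:J^0(x;v)\ge\langle\xi,v\rangle_{U^*\times U}\ \forall v\in U\}$ (Clarke subdifferential); $\iota^*$ is the adjoint of $\iota$. Hypotheses: (H(A)) $A\colon V\to V^*$ is pseudomonotone (whenever $v_n\to v$ weakly in $V$ and $\limsup_n\langle Av_n,v_n-v\rangle\le0$, then $\langle Av,v-y\rangle\le\liminf_n\langle Av_n,v_n-y\rangle$ for all $y\in V$), $\|Av\|_{V^*}\le a+b\|v\|$ ($a\ge0,b>0$), $\langle Av,v\rangle\ge\alpha\|v\|^2-\beta|v|^2$ ($\alpha>0,\beta\ge0$) for all $v\in V$. (H(J))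 $J$ is locally Lipschitz and $\|\xi\|_{U^*}\le d(1+\|u\|_U)$ for all $u\in U$, $\xi\in\partial J(u)$, $d>0$. (H($\iota$)) $\iota\colon V\to U$ is linear, continuous, compact, and $\iota=\iota_2\circ\iota_1$ where $Z$ is a Banach space with $V\subset Z\subset H$, $V\subset Z$ compact, $Z\subset H$ continuous, $\iota_1\colon V\to Z$ the identity and $\iota_2\colon Z\to U$ linear continuous. (H(f)) $f\in L^2(0,T;V^* )$. (H(0)) $u_0\in H$. Rothe scheme: for $N\in\mathbb N$, $\tau=T/N$, an element $u_\tau^0\in V$ is given for each $\tau$, such that $u_\tau^0\to u_0$ strongly in $H$ as $\tau\to0$ and $\|u_\tau^0\|\le c_0/\sqrt\tau$ with $c_0$ independent of $\tau$. Set $f_\tau^1=\frac1\tau\int_0^\tau f\,dt$ and $f_\tau^n=\frac{3}{2\tau}\int_{(n-1)\tau}^{n\tau}f\,dt-\frac1{2\tau}\int_{(n-2)\tau}^{(n-1)\tau}f\,dt$, $n=2,\dots,N$. Problem $\mathcal P_\tau$: find $\{u_\tau^n\}_{n=1}^N\subset V$ and $\{\xi_\tau^n\}_{n=1}^N\subset U^*$ with $\frac1\tau(u_\tau^1-u_\tau^0)+Au_\tau^1+\iota^*\xi_\tau^1=f_\tau^1$, $\xi_\tau^1\in\partial J(\iota u_\tau^1)$, and for $n=2,\dots,N$: $\frac1\tau(\frac32u_\tau^n-2u_\tau^{n-1}+\frac12u_\tau^{n-2})+Au_\tau^n+\iota^*\xi_\tau^n=f_\tau^n$, $\xi_\tau^n\in\partial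 J(\iota u_\tau^n)$. *)

theory Defs
  imports "HOL-Analysis.Analysis"
begin

definition weak_conv :: "(nat \<Rightarrow> 'a::real_normed_vector) \<Rightarrow> 'a \<Rightarrow> bool" where
  "weak_conv xs x \<longleftrightarrow> (\<forall>g :: 'a \<Rightarrow>\<^sub>L real. (\<lambda>n. blinfun_apply g (xs n)) \<longlonglongrightarrow> blinfun_apply g x)"

definition reflexive_space :: "'a::real_normed_vector itself \<Rightarrow> bool" where
  "reflexive_space _ \<longleftrightarrow>
     (\<forall>\<phi> :: ('a \<Rightarrow>\<^sub>L real) \<Rightarrow>\<^sub>L real. \<exists>x::'a. \<forall>g. blinfun_apply \<phi> g = blinfun_apply g x)"

definition compact_map :: "('a::real_normed_vector \<Rightarrow> 'b::real_normed_vector) \<Rightarrow> bool" where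
  "compact_map L \<longleftrightarrow> (\<forall>S. bounded S \<longrightarrow> compact (closure (L ` S)))"

definition locally_lipschitz :: "('a::metric_space \<Rightarrow> real) \<Rightarrow> bool" where
  "locally_lipschitz J \<longleftrightarrow>
     (\<forall>x. \<exists>r>0. \<exists>L. \<forall>y\<in>ball x r. \<forall>z\<in>ball x r. \<bar>J y - J z\<bar> \<le> L * dist y z)"

definition clarke_dd :: "('a::real_normed_vector \<Rightarrow> real) \<Rightarrow> 'a \<Rightarrow> 'a \<Rightarrow> ereal" where
  "clarke_dd J x v =
     Limsup (at (x, 0) within (UNIV \<times> {0<..}))
       (\<lambda>p. ereal ((J (fst p + snd p *\<^sub>R v) - J (fst p)) / snd p))"

definition clarke_subdiff :: "('a::real_normed_vector \<Rightarrow> real) \<Rightarrow> 'a \<Rightarrow> ('a \<Rightarrow>\<^sub>L real) set" where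
  "clarke_subdiff J x = {\<xi>. \<forall>v. ereal (blinfun_apply \<xi> v) \<le> clarke_dd J x v}"

text \<open>The dual space V* is represented by a (separable Banach) type 'w together with an
  isometric linear bijection D : 'w \<rightarrow> (V \<Rightarrow>L real).  The duality pairing:\<close>
definition pair :: "('w \<Rightarrow> ('v::real_normed_vector \<Rightarrow>\<^sub>L real)) \<Rightarrow> 'w \<Rightarrow> 'v \<Rightarrow> real" where
  "pair D w v = blinfun_apply (D w) v"

definition embH :: "('w \<Rightarrow> ('v::real_normed_vector \<Rightarrow>\<^sub>L real)) \<Rightarrow> ('v \<Rightarrow> 'h::real_inner) \<Rightarrow> 'h \<Rightarrow> 'w" where
  "embH D iV h = inv D (Blinfun (\<lambda>v. inner h (iV v)))"

definition adj :: "('w \<Rightarrow> ('v::real_normed_vector \<Rightarrow>\<^sub>L real)) \<Rightarrow> ('v \<Rightarrow> 'u::real_normed_vector)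
                    \<Rightarrow> ('u \<Rightarrow>\<^sub>L real) \<Rightarrow> 'w" where
  "adj D \<iota> \<xi> = inv D (Blinfun (\<lambda>v. blinfun_apply \<xi> (\<iota> v)))"

definition pseudomonotone :: "('w \<Rightarrow> ('v::real_normed_vector \<Rightarrow>\<^sub>L real)) \<Rightarrow> ('v \<Rightarrow> 'w) \<Rightarrow> bool" where
  "pseudomonotone D A \<longleftrightarrow>
     (\<forall>vs v. weak_conv vs v \<longrightarrow>
        limsup (\<lambda>n. ereal (pair D (A (vs n)) (vs n - v))) \<le> 0 \<longrightarrow>
        (\<forall>y. ereal (pair D (A v) (v - y)) \<le> liminf (\<lambda>n. ereal (pair D (A (vs n)) (vs n - y)))))"

text \<open>Averaged right-hand sides of the Rothe (BDF2) scheme, tau = T/N.\<close>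
definition f_tau :: "real \<Rightarrow> (real \<Rightarrow> 'w::{banach,second_countable_topology}) \<Rightarrow> nat \<Rightarrow> nat \<Rightarrow> 'w" where
  "f_tau T f N n =
     (let \<tau> = T / real N in
      if n = 1 then (1 / \<tau>) *\<^sub>R (LINT t:{0..\<tau>}|lborel. f t)
      else (3 / (2 * \<tau>)) *\<^sub>R (LINT t:{(real n - 1) * \<tau> .. real n * \<tau>}|lborel. f t)
           - (1 / (2 * \<tau>)) *\<^sub>R (LINT t:{(real n - 2) * \<tau> .. (real n - 1) * \<tau>}|lborel. f t))"

definition rothe_solution ::
  "('w::{banach,second_countable_topology} \<Rightarrow> ('v::real_normed_vector \<Rightarrow>\<^sub>L real)) \<Rightarrow> ('v \<Rightarrow> 'h::real_inner)
   \<Rightarrow> ('v \<Rightarrow> 'w) \<Rightarrow> ('v \<Rightarrow> 'u::real_normed_vector) \<Rightarrow> ('u \<Rightarrow> real) \<Rightarrow> (real \<Rightarrow> 'w) \<Rightarrow> real \<Rightarrow> nat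
   \<Rightarrow> 'v \<Rightarrow> (nat \<Rightarrow> 'v) \<Rightarrow> (nat \<Rightarrow> ('u \<Rightarrow>\<^sub>L real)) \<Rightarrow> bool" where
  "rothe_solution D iV A \<iota> J f T N u0 u \<xi> \<longleftrightarrow>
     (let \<tau> = T / real N in
       u 0 = u0 \<and>
       embH D iV (iV ((1 / \<tau>) *\<^sub>R (u 1 - u 0))) + A (u 1) + adj D \<iota> (\<xi> 1) = f_tau T f N 1 \<and>
       (\<forall>n. 2 \<le> n \<and> n \<le> N \<longrightarrow>
          embH D iV (iV ((1 / \<tau>) *\<^sub>R ((3/2) *\<^sub>R u n - 2 *\<^sub>R u (n - 1) + (1/2) *\<^sub>R u (n - 2))))
            + A (u n) + adj D \<iota> (\<xi> n) = f_tau T f N n) \<and>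
       (\<forall>n. 1 \<le> n \<and> n \<le> N \<longrightarrow> \<xi> n \<in> clarke_subdiff J (\<iota> (u n))))"

end

theory Submission
  imports Defs
begin


lemma int_facts:
  fixes f :: "real \<Rightarrow> 'w::{banach,second_countable_topology}"
  assumes f_meas: "(\<lambda>t. indicator {0..T} t *\<^sub>R f t) \<in> borel_measurable lborel"
    and f_L2: "set_integrable lborel {0..T} (\<lambda>t. (norm (f t))\<^sup>2)"
    and s: "0 \<le> s" "s \<le> T"
  shows "integrable lborel (\<lambda>t. indicator {0..s} t * (norm (f t))\<^sup>2)"
    and "integrable lborel (\<lambda>t. indicator {0..s} t * norm (f t))"
proof -
  let ?g = "\<lambda>t. indicator {0..T} t *\<^sub>R f t"
  have eq: "indicator {0..s} t * h (norm (f t)) = indicator {0..s} t * h (norm (?g t))" for t and h :: "real \<Rightarrow> real"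
    using s by (auto simp: indicator_def)
  have m1: "(\<lambda>t. indicator {0..s} t * (norm (f t))\<^sup>2) \<in> borel_measurable lborel"
    unfolding eq[where h="\<lambda>x. x^2"] using f_meas by measurable
  have m2: "(\<lambda>t. indicator {0..s} t * (norm (f t))) \<in> borel_measurable lborel"
    unfolding eq[where h="\<lambda>x. x"] using f_meas by measurable
  have iT: "integrable lborel (\<lambda>t. indicator {0..T} t * (norm (f t))\<^sup>2)"
    using f_L2 by (simp add: set_integrable_def)
  show i1: "integrable lborel (\<lambda>t. indicator {0..s} t * (norm (f t))\<^sup>2)"
    by (rule Bochner_Integration.integrable_bound[OF iT m1]) (use s in \<open>auto simp: indicator_def\<close>)
  have i2: "integrable lborel (\<lambda>t. indicator {0..s} t * (norm (f t))\<^sup>2 + indicator {0..s} t)"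
    by (rule Bochner_Integration.integrable_add[OF i1]) (rule integrable_real_indicator, auto simp: s)
  show "integrable lborel (\<lambda>t. indicator {0..s} t * norm (f t))"
  proof (rule Bochner_Integration.integrable_bound[OF i2 m2], rule AE_I2)
    fix t
    have "0 \<le> (norm (f t) - 1)*(norm (f t) - 1)" by simp
    then have a: "2*norm (f t) \<le> 1 + norm (f t) * norm (f t)" by (simp add: algebra_simps)
    have b: "0 \<le> norm (f t)" by simp
    from a b have "norm (f t) \<le> 1 + norm (f t)*norm(f t)" by linarith
    then have "norm (f t) \<le> (norm (f t))\<^sup>2 + 1" by (simp add: power2_eq_square)
    then show "norm (indicator {0..s} t * norm (f t)) \<le> norm (indicator {0..s} t * (norm (f t))\<^sup>2 + indicator {0..s} t)"
      by (auto simp: indicator_def)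
  qed
qed

lemma amgm: fixes n c k :: real assumes "k > 0" shows "c * n \<le> n^2 / k + k * c^2 / 4"
proof -
  have "0 \<le> (n - k*c/2)^2 / k" using assms by simp
  also have "\<dots> = n^2/k - c*n + k*c^2/4" using assms by (simp add: power2_eq_square field_simps)
  finally show ?thesis by simp
qed

lemma int_bound:
  fixes f :: "real \<Rightarrow> 'w::{banach,second_countable_topology}"
  assumes f_meas: "(\<lambda>t. indicator {0..T} t *\<^sub>R f t) \<in> borel_measurable lborel"
    and f_L2: "set_integrable lborel {0..T} (\<lambda>t. (norm (f t))\<^sup>2)"
    and s: "0 \<le> s" "s \<le> T" and c: "c \<ge> 0" and k: "k > 0"
  shows "norm (LINT t:{0..s}|lborel. f t) * c \<le> (LINT t:{0..s}|lborel. (norm (f t))\<^sup>2) / k + s * k * c^2 / 4"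
proof -
  note I = int_facts[OF f_meas f_L2 s]
  have "norm (LINT t:{0..s}|lborel. f t) \<le> integral\<^sup>L lborel (\<lambda>t. norm (indicator {0..s} t *\<^sub>R f t))"
    unfolding set_lebesgue_integral_def by (rule integral_norm_bound)
  also have "\<dots> = integral\<^sup>L lborel (\<lambda>t. indicator {0..s} t * norm (f t))"
    by (rule Bochner_Integration.integral_cong) (auto simp: indicator_def)
  finally have 1: "norm (LINT t:{0..s}|lborel. f t) * c \<le> integral\<^sup>L lborel (\<lambda>t. indicator {0..s} t * norm (f t)) * c"
    using c by (simp add: mult_right_mono)
  also have "\<dots> = integral\<^sup>L lborel (\<lambda>t. c * (indicator {0..s} t * norm (f t)))"
    by simp
  also have "\<dots> \<le> integral\<^sup>L lborel (\<lambda>t. (indicator {0..s} t * (norm (f t))\<^sup>2) / k + (k * c^2 / 4) * indicator {0..s} t)"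
  proof (rule integral_mono)
    show "integrable lborel (\<lambda>t. c * (indicator {0..s} t * norm (f t)))"
      using I(2) by simp
    show "integrable lborel (\<lambda>t. (indicator {0..s} t * (norm (f t))\<^sup>2) / k + (k * c^2 / 4) * indicator {0..s} t)"
      by (rule Bochner_Integration.integrable_add) (use I(1) s in \<open>auto intro!: integrable_real_indicator\<close>)
    fix t show "c * (indicator {0..s} t * norm (f t)) \<le> (indicator {0..s} t * (norm (f t))\<^sup>2) / k + (k * c^2 / 4) * indicator {0..s} t"
      using amgm[OF k, of c "norm (f t)"] by (auto simp: indicator_def)
  qed
  also have "\<dots> = integral\<^sup>L lborel (\<lambda>t. indicator {0..s} t * (norm (f t))\<^sup>2) / k + (k * c^2 / 4) * s"
    using I(1) s by (subst Bochner_Integration.integral_add) (auto intro!: integrable_real_indicator)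
  also have "integral\<^sup>L lborel (\<lambda>t. indicator {0..s} t * (norm (f t))\<^sup>2) = (LINT t:{0..s}|lborel. (norm (f t))\<^sup>2)"
    unfolding set_lebesgue_integral_def by simp
  finally show ?thesis by (simp add: algebra_simps)
qed

lemma G_lim:
  fixes f :: "real \<Rightarrow> 'w::{banach,second_countable_topology}"
  assumes f_meas: "(\<lambda>t. indicator {0..T} t *\<^sub>R f t) \<in> borel_measurable lborel"
    and f_L2: "set_integrable lborel {0..T} (\<lambda>t. (norm (f t))\<^sup>2)"
    and T: "T > 0"
  shows "(\<lambda>N. LINT t:{0..T / real N}|lborel. (norm (f t))\<^sup>2) \<longlonglongrightarrow> 0"
proof -
  have s: "0 \<le> T / real N" "T / real N \<le> T" for N
    using T by (auto simp: divide_le_eq)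
  have m0: "(\<lambda>t. 0::real) \<in> borel_measurable lborel" by simp
  have m: "(\<lambda>t. indicator {0..T / real N} t * (norm (f t))\<^sup>2) \<in> borel_measurable lborel" for N
    using int_facts(1)[OF f_meas f_L2 s[of N]] by (rule borel_measurable_integrable)
  have iw: "integrable lborel (\<lambda>t. indicator {0..T} t * (norm (f t))\<^sup>2)"
    using f_L2 by (simp add: set_integrable_def)
  have bd: "AE t in lborel. norm (indicator {0..T / real N} t * (norm (f t))\<^sup>2) \<le> indicator {0..T} t * (norm (f t))\<^sup>2" for N
    using s[of N] by (intro AE_I2) (auto simp: indicator_def)
  have lim: "AE t in lborel. (\<lambda>N. indicator {0..T / real N} t * (norm (f t))\<^sup>2) \<longlonglongrightarrow> 0"
    using AE_lborel_singleton[of 0]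
  proof (rule AE_mp, intro AE_I2 impI)
    fix t :: real assume "t \<noteq> 0"
    show "(\<lambda>N. indicator {0..T / real N} t * (norm (f t))\<^sup>2) \<longlonglongrightarrow> 0"
    proof (cases "t < 0")
      case True then show ?thesis by (simp add: indicator_def)
    next
      case False
      with \<open>t \<noteq> 0\<close> have t: "t > 0" by simp
      have "(\<lambda>N. T / real N) \<longlonglongrightarrow> 0"
        by (rule lim_const_over_n)
      then have "eventually (\<lambda>N. T / real N < t) sequentially"
        using t by (rule order_tendstoD)
      then have "eventually (\<lambda>N. indicator {0..T / real N} t * (norm (f t))\<^sup>2 = 0) sequentially"
        by eventually_elim (auto simp: indicator_def)
      then show ?thesis by (rule tendsto_eventually)
    qed
  qed
  have "(\<lambda>N. integral\<^sup>L lborel (\<lambda>t. indicator {0..T / real N} t * (norm (f t))\<^sup>2)) \<longlonglongrightarrow> integral\<^sup>L lborel (\<lambda>t. 0::real)"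
    using Bochner_Integration.integral_dominated_convergence[OF m0 m iw lim bd] by simp
  then show ?thesis by (simp add: set_lebesgue_integral_def)
qed



lemma real_core:
  fixes \<tau> \<alpha> \<beta> d a b \<epsilon> C E X Y Q P \<delta> G nv k IP IW Au Xi Pu Av Xiv Pv :: real
  assumes pos: "\<tau> > 0" "\<alpha> > 0" "\<beta> \<ge> 0" "d > 0" "a \<ge> 0" "b > 0" "\<epsilon> \<ge> 0" "C \<ge> 0"
    "E \<ge> 0" "X \<ge> 0" "Y \<ge> 0" "Q \<ge> 0" "P \<ge> 0" "\<delta> \<ge> 0" "G \<ge> 0" "nv \<ge> 0" "k \<ge> 0"
  and h1: "E^2 + IP + \<tau>*Au + \<tau>*Xi = Pu"
  and h2: "IP \<ge> IW - E*\<delta>"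
  and h3: "IW + \<tau>*Av + \<tau>*Xiv = Pv"
  and hA: "Au \<ge> \<alpha>*X^2 - \<beta>*Q^2"
  and hXi: "\<bar>Xi\<bar> \<le> d*(1+Y)*Y"
  and hY: "Y \<le> \<epsilon>*X + C*Q"
  and he: "(3*d+2)*\<epsilon>^2 \<le> \<alpha>/8"
  and hPu: "Pu \<le> G/\<alpha> + \<tau>*\<alpha>*X^2/4"
  and hPv: "\<bar>Pv\<bar> \<le> (G + \<tau>/4)*nv"
  and hAv: "\<bar>Av\<bar> \<le> (a + b*X)*nv"
  and hXiv: "\<bar>Xiv\<bar> \<le> d*(1+Y)*k"
  and hQ: "Q \<le> P + E"
  and ht: "2*\<tau>*(\<beta> + (3*d+2)*C^2) \<le> 1/4"
  shows "E^2 \<le> 2*\<delta>^2 + 2*(G/\<alpha> + \<tau>*d/2 + (G+\<tau>/4)*nv + \<tau>*a*nv + 2*\<tau>*b^2*nv^2/\<alpha> + \<tau>*d*k + \<tau>*d^2*k^2/4 + 2*\<tau>*(\<beta>+(3*d+2)*C^2)*P^2)"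
proof -
  define B where "B = \<beta> + (3*d+2)*C^2"
  have B0: "B \<ge> 0" using pos by (simp add: B_def)
  have sq: "(x+y)^2 \<le> 2*x^2 + 2*y^2" for x y :: real
    using sum_squares_ge_zero[of "x-y" 0] by (simp add: power2_eq_square algebra_simps)
  have Y2: "Y^2 \<le> 2*\<epsilon>^2*X^2 + 2*C^2*Q^2"
  proof -
    have "Y^2 \<le> (\<epsilon>*X + C*Q)^2" using hY pos by (intro power_mono) auto
    also have "\<dots> \<le> 2*(\<epsilon>*X)^2 + 2*(C*Q)^2" by (rule sq)
    finally show ?thesis by (simp add: power_mult_distrib)
  qed
  have Yle: "Y \<le> 1/2 + Y^2/2"
    using sum_squares_ge_zero[of "Y-1" 0] by (simp add: power2_eq_square algebra_simps)
  have Xi1: "\<bar>Xi\<bar> \<le> d/2 + (3*d/2)*Y^2"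
  proof -
    have "d*(1+Y)*Y = d*Y + d*Y^2" by (simp add: power2_eq_square algebra_simps)
    also have "\<dots> \<le> d*(1/2 + Y^2/2) + d*Y^2" using Yle pos by (intro add_mono mult_left_mono) auto
    finally show ?thesis using hXi by (simp add: algebra_simps)
  qed
  have YX: "(3*d/2 + 1)*Y^2 \<le> \<alpha>*X^2/8 + (3*d+2)*C^2*Q^2"
  proof -
    have "(3*d/2 + 1)*Y^2 \<le> (3*d/2 + 1)*(2*\<epsilon>^2*X^2 + 2*C^2*Q^2)"
      using Y2 pos by (intro mult_left_mono) auto
    also have "\<dots> = ((3*d+2)*\<epsilon>^2)*X^2 + (3*d+2)*C^2*Q^2" by (simp add: algebra_simps)
    also have "\<dots> \<le> (\<alpha>/8)*X^2 + (3*d+2)*C^2*Q^2" using he pos by (intro add_mono mult_right_mono) auto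
    finally show ?thesis by simp
  qed
  have bX: "b*X*nv \<le> \<alpha>*X^2/8 + 2*b^2*nv^2/\<alpha>"
  proof -
    have "0 \<le> (\<alpha>*X/4 - b*nv)^2 * (2/\<alpha>)" using pos by simp
    also have "\<dots> = \<alpha>*X^2/8 + 2*b^2*nv^2/\<alpha> - b*X*nv" using pos by (simp add: power2_eq_square field_simps)
    finally show ?thesis by simp
  qed
  have dYk: "d*Y*k \<le> Y^2 + d^2*k^2/4"
  proof -
    have "0 \<le> (Y - d*k/2)^2" by simp
    also have "\<dots> = Y^2 + d^2*k^2/4 - d*Y*k" by (simp add: power2_eq_square field_simps)
    finally show ?thesis by simp
  qed
  have Q2: "Q^2 \<le> 2*P^2 + 2*E^2"
  proof -
    have "Q^2 \<le> (P+E)^2" using hQ pos by (intro power_mono) auto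
    then show ?thesis using sq[of P E] by linarith
  qed
  have Ed: "E*\<delta> \<le> E^2/4 + \<delta>^2"
  proof -
    have "0 \<le> (E/2 - \<delta>)^2" by simp
    also have "\<dots> = E^2/4 + \<delta>^2 - E*\<delta>" by (simp add: power2_eq_square field_simps)
    finally show ?thesis by simp
  qed
  have Av1: "\<bar>Av\<bar> \<le> a*nv + \<alpha>*X^2/8 + 2*b^2*nv^2/\<alpha>"
    using hAv bX by (simp add: algebra_simps)
  have Xiv1: "\<bar>Xiv\<bar> \<le> d*k + Y^2 + d^2*k^2/4"
    using hXiv dYk by (simp add: algebra_simps)
  define xx where "xx = \<tau>*X^2"
  define yy where "yy = \<tau>*Y^2"
  define qq where "qq = \<tau>*Q^2"
  define c2 where "c2 = (3*d+2)*C^2"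
  have Bc: "B = \<beta> + c2" by (simp add: B_def c2_def)
  have t1: "\<tau>*(-Xi) \<le> \<tau>*d/2 + 3/2*(d*yy)"
  proof -
    have "\<tau>*(-Xi) \<le> \<tau>*(d/2 + (3*d/2)*Y^2)" using Xi1 pos by (intro mult_left_mono) auto
    then show ?thesis by (simp add: yy_def algebra_simps)
  qed
  have t2: "\<tau>*(-Au) \<le> \<beta>*qq - \<alpha>*xx"
  proof -
    have "\<tau>*(-Au) \<le> \<tau>*(\<beta>*Q^2 - \<alpha>*X^2)" using hA pos by (intro mult_left_mono) auto
    then show ?thesis by (simp add: qq_def xx_def algebra_simps)
  qed
  have t3: "\<tau>*Av \<le> \<tau>*a*nv + \<alpha>*xx/8 + 2*\<tau>*b^2*nv^2/\<alpha>"
  proof -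
    have "\<tau>*Av \<le> \<tau>*(a*nv + \<alpha>*X^2/8 + 2*b^2*nv^2/\<alpha>)" using Av1 pos by (intro mult_left_mono) auto
    then show ?thesis by (simp add: xx_def algebra_simps)
  qed
  have t4: "\<tau>*Xiv \<le> \<tau>*d*k + yy + \<tau>*d^2*k^2/4"
  proof -
    have "\<tau>*Xiv \<le> \<tau>*(d*k + Y^2 + d^2*k^2/4)" using Xiv1 pos by (intro mult_left_mono) auto
    then show ?thesis by (simp add: yy_def algebra_simps)
  qed
  have t5: "3/2*(d*yy) + yy \<le> \<alpha>*xx/8 + c2*qq"
  proof -
    have "\<tau>*((3*d/2 + 1)*Y^2) \<le> \<tau>*(\<alpha>*X^2/8 + (3*d+2)*C^2*Q^2)" using YX pos by (intro mult_left_mono) auto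
    then show ?thesis by (simp add: yy_def xx_def qq_def c2_def algebra_simps)
  qed
  have t6: "\<beta>*qq + c2*qq \<le> 2*(\<tau>*B*P^2) + 2*(\<tau>*B*E^2)"
  proof -
    have "\<tau>*(B*Q^2) \<le> \<tau>*(B*(2*P^2 + 2*E^2))" using Q2 pos B0 by (intro mult_left_mono) auto
    then show ?thesis by (simp add: qq_def Bc algebra_simps)
  qed
  have t7: "2*(\<tau>*B*E^2) \<le> E^2/4"
  proof -
    have "2*\<tau>*B*E^2 \<le> 1/4*E^2" using mult_right_mono[OF ht, of "E^2"] by (simp add: B_def)
    then show ?thesis by simp
  qed
  have main: "E^2 \<le> Pu - IW + E*\<delta> + \<tau>*(-Au) + \<tau>*(-Xi)" using h1 h2 by (simp add: algebra_simps)
  have main2: "-IW \<le> \<tau>*Av + \<tau>*Xiv + (G + \<tau>/4)*nv" using h3 hPv by linarith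
  have axx: "\<alpha>*xx \<ge> 0" using pos by (simp add: xx_def)
  have Pu2: "Pu \<le> G/\<alpha> + \<alpha>*xx/4" using hPu by (simp add: xx_def algebra_simps)
  have "E^2 \<le> E^2/2 + \<delta>^2 + (G/\<alpha> + \<tau>*d/2 + (G+\<tau>/4)*nv + \<tau>*a*nv + 2*\<tau>*b^2*nv^2/\<alpha> + \<tau>*d*k + \<tau>*d^2*k^2/4 + 2*(\<tau>*B*P^2))"
    using main main2 Pu2 Ed axx t1 t2 t3 t4 t5 t6 t7 by linarith
  then show ?thesis unfolding B_def by (simp add: algebra_simps)
qed



lemma ehrling:
  fixes iZ1 :: "'v::real_normed_vector \<Rightarrow> 'z::real_normed_vector" and iZ2 :: "'z \<Rightarrow> 'h::real_normed_vector"
  assumes l1: "bounded_linear iZ1" and c1: "compact_map iZ1" and l2: "bounded_linear iZ2"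
    and i2: "inj iZ2" and e: "\<epsilon> > 0"
  shows "\<exists>C\<ge>0. \<forall>v. norm (iZ1 v) \<le> \<epsilon> * norm v + C * norm (iZ2 (iZ1 v))"
proof (rule ccontr)
  assume neg: "\<not> ?thesis"
  have "\<forall>n::nat. \<exists>v. norm (iZ1 v) > \<epsilon> * norm v + real n * norm (iZ2 (iZ1 v))"
  proof
    fix n :: nat
    have "\<not> (\<forall>v. norm (iZ1 v) \<le> \<epsilon> * norm v + real n * norm (iZ2 (iZ1 v)))"
    proof
      assume h: "\<forall>v. norm (iZ1 v) \<le> \<epsilon> * norm v + real n * norm (iZ2 (iZ1 v))"
      have "\<exists>C\<ge>0. \<forall>v. norm (iZ1 v) \<le> \<epsilon> * norm v + C * norm (iZ2 (iZ1 v))"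
        by (rule exI[of _ "real n"]) (use h in simp)
      with neg show False by contradiction
    qed
    then show "\<exists>v. norm (iZ1 v) > \<epsilon> * norm v + real n * norm (iZ2 (iZ1 v))"
      by (simp add: not_le)
  qed
  then have "\<exists>vs. \<forall>n. norm (iZ1 (vs n)) > \<epsilon> * norm (vs n) + real n * norm (iZ2 (iZ1 (vs n)))"
    by (rule choice)
  then obtain vs where vs': "\<forall>n. norm (iZ1 (vs n)) > \<epsilon> * norm (vs n) + real n * norm (iZ2 (iZ1 (vs n)))"
    by blast
  have vs: "norm (iZ1 (vs n)) > \<epsilon> * norm (vs n) + real n * norm (iZ2 (iZ1 (vs n)))" for n
    using vs' by blast
  interpret L1: bounded_linear iZ1 by fact
  interpret L2: bounded_linear iZ2 by fact
  have nz: "vs n \<noteq> 0" for n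
  proof
    assume "vs n = 0"
    then show False using vs[of n] by (simp add: L1.zero L2.zero)
  qed
  define w where "w n = (1 / norm (vs n)) *\<^sub>R vs n" for n
  have nw: "norm (w n) = 1" for n
    using nz[of n] by (simp add: w_def)
  have ww: "norm (iZ1 (w n)) > \<epsilon> + real n * norm (iZ2 (iZ1 (w n)))" for n
  proof -
    have p: "norm (vs n) > 0" using nz[of n] by simp
    have "iZ1 (w n) = (1 / norm (vs n)) *\<^sub>R iZ1 (vs n)" by (simp add: w_def L1.scaleR)
    moreover have "iZ2 (iZ1 (w n)) = (1 / norm (vs n)) *\<^sub>R iZ2 (iZ1 (vs n))" by (simp add: w_def L1.scaleR L2.scaleR)
    ultimately have a: "norm (iZ1 (w n)) = norm (iZ1 (vs n)) / norm (vs n)"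
        "norm (iZ2 (iZ1 (w n))) = norm (iZ2 (iZ1 (vs n))) / norm (vs n)" by simp_all
    have "(\<epsilon> * norm (vs n) + real n * norm (iZ2 (iZ1 (vs n)))) / norm (vs n) < norm (iZ1 (vs n)) / norm (vs n)"
      using vs[of n] p by (simp add: divide_strict_right_mono)
    then show ?thesis using p unfolding a by (simp add: add_divide_distrib)
  qed
  obtain K where K: "K > 0" "\<And>x. norm (iZ1 x) \<le> norm x * K"
    using L1.pos_bounded by blast
  have "bounded (range w)"
    using nw by (auto simp: bounded_iff intro!: exI[of _ 1])
  then have "compact (closure (iZ1 ` range w))"
    using c1 by (simp add: compact_map_def)
  then have sc: "seq_compact (closure (iZ1 ` range w))"
    by (rule compact_imp_seq_compact)
  have "\<forall>n. iZ1 (w n) \<in> closure (iZ1 ` range w)"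
    by (intro allI closure_subset[THEN subsetD]) blast
  then obtain l r where l: "l \<in> closure (iZ1 ` range w)" "strict_mono r" "((\<lambda>n. iZ1 (w n)) \<circ> r) \<longlonglongrightarrow> l"
    using seq_compactE[OF sc] by metis
  have zl: "(\<lambda>n. iZ1 (w (r n))) \<longlonglongrightarrow> l" using l(3) by (simp add: o_def)
  have "norm l \<ge> \<epsilon>"
  proof (rule tendsto_lowerbound[OF tendsto_norm[OF zl]])
    show "\<forall>\<^sub>F n in sequentially. \<epsilon> \<le> norm (iZ1 (w (r n)))"
    proof (intro always_eventually allI)
      fix n
      have "0 \<le> real (r n) * norm (iZ2 (iZ1 (w (r n))))" by simp
      then show "\<epsilon> \<le> norm (iZ1 (w (r n)))" using ww[of "r n"] by linarith
    qed
  qed simp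
  have t2: "(\<lambda>n. norm (iZ2 (iZ1 (w (r n))))) \<longlonglongrightarrow> norm (iZ2 l)"
    by (intro tendsto_norm L2.tendsto zl)
  have rlim: "filterlim r at_top sequentially" using l(2) by (rule filterlim_subseq)
  have t3: "(\<lambda>n. K / real (r n)) \<longlonglongrightarrow> 0"
    using lim_const_over_n[of K] rlim by (rule filterlim_compose)
  have ev: "\<forall>\<^sub>F n in sequentially. norm (iZ2 (iZ1 (w (r n)))) \<le> K / real (r n)"
  proof -
    have "\<forall>\<^sub>F n in sequentially. r n \<ge> 1"
      using rlim by (simp add: filterlim_at_top)
    then show ?thesis
    proof eventually_elim
      case (elim n)
      have "real (r n) * norm (iZ2 (iZ1 (w (r n)))) < norm (iZ1 (w (r n)))"
        using ww[of "r n"] e by simp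
      also have "\<dots> \<le> K" using K(2)[of "w (r n)"] nw by simp
      finally show ?case using elim by (simp add: field_simps)
    qed
  qed
  have "norm (iZ2 l) \<le> 0"
    by (rule tendsto_le[OF _ t3 t2 ev]) simp
  then have "iZ2 l = 0" by simp
  then have "l = 0" using i2 L2.zero by (metis injD)
  with \<open>norm l \<ge> \<epsilon>\<close> e show False by simp
qed


lemma eq_apply:
  fixes iV :: "'v::real_normed_vector \<Rightarrow> 'h::real_inner" and D :: "'w::real_normed_vector \<Rightarrow> ('v \<Rightarrow>\<^sub>L real)"
    and \<iota> :: "'v \<Rightarrow> 'u::real_normed_vector"
  assumes D_lin: "bounded_linear D" and D_bij: "bij D" and iV_lin: "bounded_linear iV"
    and iota_lin: "bounded_linear \<iota>"
    and eq: "embH D iV y + A u1 + adj D \<iota> \<xi>1 = F"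
  shows "inner y (iV x) + pair D (A u1) x + blinfun_apply \<xi>1 (\<iota> x) = pair D F x"
proof -
  interpret DL: bounded_linear D by fact
  have s: "D (inv D z) = z" for z using D_bij by (simp add: bij_is_surj surj_f_inv_f)
  have b1: "bounded_linear (\<lambda>v. inner y (iV v))"
    by (rule bounded_linear_compose[OF bounded_linear_inner_right iV_lin])
  have b2: "bounded_linear (\<lambda>v. blinfun_apply \<xi>1 (\<iota> v))"
    by (rule bounded_linear_compose[OF blinfun.bounded_linear_right iota_lin])
  have "D F = D (embH D iV y) + D (A u1) + D (adj D \<iota> \<xi>1)"
    by (simp add: eq[symmetric] DL.add)
  also have "D (embH D iV y) = Blinfun (\<lambda>v. inner y (iV v))" by (simp add: embH_def s)
  also have "D (adj D \<iota> \<xi>1) = Blinfun (\<lambda>v. blinfun_apply \<xi>1 (\<iota> v))" by (simp add: adj_def s)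
  finally have "blinfun_apply (D F) x = inner y (iV x) + blinfun_apply (D (A u1)) x + blinfun_apply \<xi>1 (\<iota> x)"
    by (simp add: bounded_linear_Blinfun_apply[OF b1] bounded_linear_Blinfun_apply[OF b2] plus_blinfun.rep_eq)
  then show ?thesis by (simp add: pair_def)
qed

lemma ehrling2:
  fixes iZ1 :: "'v::real_normed_vector \<Rightarrow> 'z::real_normed_vector" and iZ2 :: "'z \<Rightarrow> 'h::real_normed_vector"
    and \<iota>2 :: "'z \<Rightarrow> 'u::real_normed_vector"
  assumes l1: "bounded_linear iZ1" and c1: "compact_map iZ1" and l2: "bounded_linear iZ2"
    and i2: "inj iZ2" and l3: "bounded_linear \<iota>2" and e: "\<epsilon> > 0"
    and fV: "\<And>v. iV v = iZ2 (iZ1 v)" and fi: "\<And>v. \<iota> v = \<iota>2 (iZ1 v)"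
  shows "\<exists>C\<ge>0. \<forall>v. norm (\<iota> v) \<le> \<epsilon> * norm v + C * norm (iV v)"
proof -
  interpret L3: bounded_linear \<iota>2 by fact
  obtain K where K: "K > 0" "\<And>x. norm (\<iota>2 x) \<le> norm x * K"
    using L3.pos_bounded by blast
  obtain C where C: "C \<ge> 0" "\<And>v. norm (iZ1 v) \<le> (\<epsilon>/K) * norm v + C * norm (iZ2 (iZ1 v))"
    using ehrling[OF l1 c1 l2 i2, of "\<epsilon>/K"] e K by auto
  show ?thesis
  proof (intro exI[of _ "K*C"] conjI allI)
    show "0 \<le> K*C" using K C by simp
    fix v
    have "norm (\<iota> v) \<le> norm (iZ1 v) * K" using K(2) fi by simp
    also have "\<dots> \<le> ((\<epsilon>/K) * norm v + C * norm (iZ2 (iZ1 v))) * K"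
      using C(2)[of v] K by (intro mult_right_mono) auto
    also have "\<dots> = \<epsilon> * norm v + K*C * norm (iV v)" using K by (simp add: fV field_simps)
    finally show "norm (\<iota> v) \<le> \<epsilon> * norm v + K*C * norm (iV v)" .
  qed
qed


theorem lemma4p2:
  fixes iV :: "'v::{banach,second_countable_topology} \<Rightarrow> 'h::{real_inner,complete_space,second_countable_topology}"
    and D :: "'w::{banach,second_countable_topology} \<Rightarrow> ('v \<Rightarrow>\<^sub>L real)"
    and A :: "'v \<Rightarrow> 'w"
    and J :: "'u::banach \<Rightarrow> real"
    and \<iota> :: "'v \<Rightarrow> 'u"
    and iZ1 :: "'v \<Rightarrow> 'z::banach" and iZ2 :: "'z \<Rightarrow> 'h" and \<iota>2 :: "'z \<Rightarrow> 'u"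
    and f :: "real \<Rightarrow> 'w" and T :: real and u0 :: 'h
    and a b \<alpha> \<beta> d c0 :: real
    and u0t :: "nat \<Rightarrow> 'v"
    and u :: "nat \<Rightarrow> nat \<Rightarrow> 'v" and \<xi> :: "nat \<Rightarrow> nat \<Rightarrow> ('u \<Rightarrow>\<^sub>L real)"
  assumes T_pos: "T > 0"
    (* spaces and embeddings V \<subset> H \<subset> V* *)
    and V_refl: "reflexive_space TYPE('v)"
    and U_refl: "reflexive_space TYPE('u)"
    and iV_lin: "bounded_linear iV" and iV_inj: "inj iV"
    and iV_dense: "closure (range iV) = UNIV"
    and iV_compact: "compact_map iV"
    and D_lin: "bounded_linear D" and D_bij: "bij D" and D_isom: "\<And>w. norm (D w) = norm w"
    and H_dense: "closure (range (embH D iV)) = UNIV"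
    (* H(A) *)
    and A_pm: "pseudomonotone D A"
    and A_bound: "a \<ge> 0" "b > 0" "\<And>v. norm (A v) \<le> a + b * norm v"
    and A_coerc: "\<alpha> > 0" "\<beta> \<ge> 0"
                 "\<And>v. pair D (A v) v \<ge> \<alpha> * (norm v)\<^sup>2 - \<beta> * (norm (iV v))\<^sup>2"
    (* H(J) *)
    and J_lip: "locally_lipschitz J"
    and J_growth: "d > 0" "\<And>x \<zeta>. \<zeta> \<in> clarke_subdiff J x \<Longrightarrow> norm \<zeta> \<le> d * (1 + norm x)"
    (* H(iota) *)
    and iota_lin: "bounded_linear \<iota>" and iota_compact: "compact_map \<iota>"
    and iZ1_lin: "bounded_linear iZ1" and iZ1_inj: "inj iZ1" and iZ1_compact: "compact_map iZ1"
    and iZ2_lin: "bounded_linear iZ2" and iZ2_inj: "inj iZ2"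
    and iV_factor: "\<And>v. iV v = iZ2 (iZ1 v)"
    and iota2_lin: "bounded_linear \<iota>2"
    and iota_factor: "\<And>v. \<iota> v = \<iota>2 (iZ1 v)"
    (* H(f) *)
    and f_meas: "(\<lambda>t. indicator {0..T} t *\<^sub>R f t) \<in> borel_measurable lborel"
    and f_L2: "set_integrable lborel {0..T} (\<lambda>t. (norm (f t))\<^sup>2)"
    (* initial data of the scheme, indexed by N with tau = T/N *)
    and u0t_conv: "(\<lambda>N. iV (u0t N)) \<longlonglongrightarrow> u0"
    and u0t_bound: "\<And>N. N \<ge> 1 \<Longrightarrow> norm (u0t N) \<le> c0 / sqrt (T / real N)"
    (* solutions of P_tau for all sufficiently small tau *)
    and sol: "eventually (\<lambda>N. rothe_solution D iV A \<iota> J f T N (u0t N) (u N) (\<xi> N)) sequentially"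
  shows "(\<lambda>N. iV (u N 1) - iV (u0t N)) \<longlonglongrightarrow> 0"
proof -
  interpret iVL: bounded_linear iV by fact
  interpret DL: bounded_linear D by fact
  interpret IL: bounded_linear \<iota> by fact
  define \<epsilon> where "\<epsilon> = sqrt (\<alpha> / (8*(3*d+2)))"
  have e0: "\<epsilon> > 0" using A_coerc J_growth by (simp add: \<epsilon>_def)
  have e2': "\<epsilon>^2 = \<alpha> / (8*(3*d+2))"
    using A_coerc J_growth unfolding \<epsilon>_def by (intro real_sqrt_pow2) simp
  have e2: "(3*d+2)*\<epsilon>^2 \<le> \<alpha>/8"
    using J_growth unfolding e2' by (simp add: field_simps)
  obtain C where C: "C \<ge> 0" "\<And>x. norm (\<iota> x) \<le> \<epsilon> * norm x + C * norm (iV x)"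
    using ehrling2[OF iZ1_lin iZ1_compact iZ2_lin iZ2_inj iota2_lin e0 iV_factor iota_factor] by blast
  define B where "B = \<beta> + (3*d+2)*C^2"
  have B0: "B \<ge> 0" using A_coerc C J_growth by (simp add: B_def)
  define \<tau> where "\<tau> N = T / real N" for N :: nat
  define G where "G N = (LINT t:{0..\<tau> N}|lborel. (norm (f t))\<^sup>2)" for N
  define r where "r v N = G N/\<alpha> + \<tau> N*d/2 + (G N+\<tau> N/4)*norm v + \<tau> N*a*norm v + 2*\<tau> N*b^2*(norm v)^2/\<alpha>
      + \<tau> N*d*norm (\<iota> v) + \<tau> N*d^2*(norm (\<iota> v))^2/4 + 2*\<tau> N*B*(norm (iV (u0t N)))^2" for v N
  have tau_lim: "\<tau> \<longlonglongrightarrow> 0" unfolding \<tau>_def by (rule lim_const_over_n)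
  have G_lim': "G \<longlonglongrightarrow> 0" unfolding G_def \<tau>_def by (rule G_lim[OF f_meas f_L2 T_pos])
  have rlim: "(\<lambda>N. r v N) \<longlonglongrightarrow> 0" for v
  proof -
    have "(\<lambda>N. r v N) \<longlonglongrightarrow> 0/\<alpha> + 0*d/2 + (0+0/4)*norm v + 0*a*norm v + 2*0*b^2*(norm v)^2/\<alpha>
      + 0*d*norm (\<iota> v) + 0*d^2*(norm (\<iota> v))^2/4 + 2*0*B*(norm u0)^2"
      unfolding r_def by (intro tendsto_intros tau_lim G_lim' u0t_conv) (use A_coerc in auto)
    then show ?thesis by simp
  qed
  have key: "eventually (\<lambda>N. (norm (iV (u N 1) - iV (u0t N)))^2 \<le> 2*(norm (iV (u0t N) - iV v))^2 + 2*r v N) sequentially" for v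
  proof -
    have ev1: "eventually (\<lambda>N. 2*\<tau> N*B < 1/4) sequentially"
    proof -
      have "(\<lambda>N. 2*\<tau> N*B) \<longlonglongrightarrow> 2*0*B" by (intro tendsto_intros tau_lim)
      then show ?thesis by (rule order_tendstoD) simp
    qed
    have ev2: "eventually (\<lambda>N. N \<ge> 1) sequentially" by (rule eventually_ge_at_top)
    show ?thesis using sol ev1 ev2
    proof eventually_elim
      case (elim N)
      define t where "t = \<tau> N"
      define u1 where "u1 = u N 1"
      define u00 where "u00 = u0t N"
      define I where "I = (LINT s:{0..t}|lborel. f s)"
      have t0: "t > 0" using elim T_pos by (simp add: t_def \<tau>_def)
      have tT: "t \<le> T" using elim T_pos by (simp add: t_def \<tau>_def divide_le_eq)
      have ft: "f_tau T f N 1 = (1/t) *\<^sub>R I"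
        by (simp add: f_tau_def t_def \<tau>_def I_def Let_def)
      have A1: "u N 0 = u0t N"
        and A2: "embH D iV (iV ((1 / t) *\<^sub>R (u N 1 - u N 0))) + A (u N 1) + adj D \<iota> (\<xi> N 1) = f_tau T f N 1"
        and A3: "\<forall>n. 1 \<le> n \<and> n \<le> N \<longrightarrow> \<xi> N n \<in> clarke_subdiff J (\<iota> (u N n))"
        using elim(1) unfolding rothe_solution_def Let_def t_def \<tau>_def by blast+
      have eq1: "embH D iV (iV ((1 / t) *\<^sub>R (u1 - u00))) + A u1 + adj D \<iota> (\<xi> N 1) = (1/t) *\<^sub>R I"
        using A2 unfolding A1 ft u1_def u00_def .
      have xi: "\<xi> N 1 \<in> clarke_subdiff J (\<iota> u1)"
        using A3[rule_format, of 1] elim(3) by (simp add: u1_def)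
      define e where "e = iV u1 - iV u00"
      have idx: "inner e (iV x) + t * pair D (A u1) x + t * blinfun_apply (\<xi> N 1) (\<iota> x) = pair D I x" for x
      proof -
        have "inner (iV ((1 / t) *\<^sub>R (u1 - u00))) (iV x) + pair D (A u1) x + blinfun_apply (\<xi> N 1) (\<iota> x) = pair D ((1/t) *\<^sub>R I) x"
          by (rule eq_apply[where A=A and ?u1.0=u1, OF D_lin D_bij iV_lin iota_lin eq1])
        then have "(1/t) * inner e (iV x) + pair D (A u1) x + blinfun_apply (\<xi> N 1) (\<iota> x) = (1/t) * pair D I x"
          by (simp add: e_def iVL.scaleR iVL.diff DL.scaleR pair_def scaleR_blinfun.rep_eq)
        then have "t * ((1/t) * inner e (iV x) + pair D (A u1) x + blinfun_apply (\<xi> N 1) (\<iota> x)) = t * ((1/t) * pair D I x)"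
          by simp
        then show ?thesis using t0 by (simp add: algebra_simps)
      qed
      have nxi: "norm (\<xi> N 1) \<le> d * (1 + norm (\<iota> u1))" using J_growth(2)[OF xi] .
      have pb: "\<bar>pair D w x\<bar> \<le> norm w * norm x" for w x
        using norm_blinfun[of "D w" x] D_isom[of w] by (simp add: pair_def)
      have xb: "\<bar>blinfun_apply (\<xi> N 1) y\<bar> \<le> d * (1 + norm (\<iota> u1)) * norm y" for y
      proof -
        have "\<bar>blinfun_apply (\<xi> N 1) y\<bar> \<le> norm (\<xi> N 1) * norm y" using norm_blinfun[of "\<xi> N 1" y] by simp
        also have "\<dots> \<le> d * (1 + norm (\<iota> u1)) * norm y" using nxi by (intro mult_right_mono) auto
        finally show ?thesis .
      qed
      have Ib1: "norm I * norm u1 \<le> G N / \<alpha> + t * \<alpha> * (norm u1)^2 / 4"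
        using int_bound[OF f_meas f_L2 _ tT, of "norm u1" \<alpha>] t0 A_coerc
        by (simp add: I_def G_def t_def)
      have Ib2: "norm I \<le> G N + t / 4"
        using int_bound[OF f_meas f_L2 _ tT, of 1 1] t0
        by (simp add: I_def G_def t_def)
      have G0: "G N \<ge> 0" unfolding G_def set_lebesgue_integral_def
        by (rule integral_nonneg_AE) (auto simp: indicator_def)
      have h1: "(norm e)^2 + inner e (iV u00) + t * pair D (A u1) u1 + t * blinfun_apply (\<xi> N 1) (\<iota> u1) = pair D I u1"
      proof -
        have "inner e (iV u1) = inner e (iV u00) + (norm e)^2"
          by (simp add: e_def inner_diff_right power2_norm_eq_inner)
        then show ?thesis using idx[of u1] by linarith
      qed
      have h2: "inner e (iV u00) \<ge> inner e (iV v) - norm e * norm (iV u00 - iV v)"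
      proof -
        have "\<bar>inner e (iV u00 - iV v)\<bar> \<le> norm e * norm (iV u00 - iV v)" by (rule Cauchy_Schwarz_ineq2)
        then show ?thesis by (simp add: inner_diff_right)
      qed
      have hQ: "norm (iV u1) \<le> norm (iV u00) + norm e"
        using norm_triangle_ineq[of "iV u00" e] by (simp add: e_def)
      have hPu: "pair D I u1 \<le> G N / \<alpha> + t * \<alpha> * (norm u1)^2 / 4"
        using pb[of I u1] Ib1 by linarith
      have hPv: "\<bar>pair D I v\<bar> \<le> (G N + t/4) * norm v"
        using pb[of I v] mult_right_mono[OF Ib2 norm_ge_zero[of v]] by linarith
      have hAv: "\<bar>pair D (A u1) v\<bar> \<le> (a + b * norm u1) * norm v"
        using pb[of "A u1" v] mult_right_mono[OF A_bound(3)[of u1] norm_ge_zero[of v]] by linarith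
      have hXi: "\<bar>blinfun_apply (\<xi> N 1) (\<iota> u1)\<bar> \<le> d * (1 + norm (\<iota> u1)) * norm (\<iota> u1)" by (rule xb)
      have hXiv: "\<bar>blinfun_apply (\<xi> N 1) (\<iota> v)\<bar> \<le> d * (1 + norm (\<iota> u1)) * norm (\<iota> v)" by (rule xb)
      have ht: "2*t*(\<beta> + (3*d+2)*C^2) \<le> 1/4" using elim(2) by (simp add: t_def B_def)
      have R: "(norm e)^2 \<le> 2*(norm (iV u00 - iV v))^2 + 2*(G N/\<alpha> + t*d/2 + (G N+t/4)*norm v + t*a*norm v
          + 2*t*b^2*(norm v)^2/\<alpha> + t*d*norm (\<iota> v) + t*d^2*(norm (\<iota> v))^2/4 + 2*t*(\<beta>+(3*d+2)*C^2)*(norm (iV u00))^2)"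
        by (rule real_core[OF t0 A_coerc(1,2) J_growth(1) A_bound(1,2) less_imp_le[OF e0] C(1)
              norm_ge_zero norm_ge_zero norm_ge_zero norm_ge_zero norm_ge_zero norm_ge_zero G0 norm_ge_zero norm_ge_zero
              h1 h2 idx[of v] A_coerc(3)[of u1] hXi C(2)[of u1] e2 hPu hPv hAv hXiv hQ ht])
      show ?case using R by (simp add: r_def e_def u1_def u00_def t_def B_def)
    qed
  qed
  show ?thesis
  proof (rule tendstoI)
    fix \<eta> :: real assume \<eta>: "\<eta> > 0"
    have "u0 \<in> closure (range iV)" using iV_dense by simp
    then have "\<forall>e>0. \<exists>x. dist (iV x) u0 < e" unfolding closure_approachable by auto
    then obtain v where yv: "dist (iV v) u0 < \<eta>/4" using \<eta> by (meson divide_pos_pos zero_less_numeral)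
    have ev3: "eventually (\<lambda>N. dist (iV (u0t N)) u0 < \<eta>/4) sequentially"
      using u0t_conv \<eta> unfolding tendsto_iff by (meson divide_pos_pos zero_less_numeral)
    have ev4: "eventually (\<lambda>N. r v N < \<eta>^2/8) sequentially"
      using order_tendstoD(2)[OF rlim[of v], of "\<eta>^2/8"] \<eta> by simp
    show "eventually (\<lambda>N. dist (iV (u N 1) - iV (u0t N)) 0 < \<eta>) sequentially"
      using key[of v] ev3 ev4
    proof eventually_elim
      case (elim N)
      have "norm (iV (u0t N) - iV v) \<le> dist (iV (u0t N)) u0 + dist (iV v) u0"
        using norm_triangle_ineq[of "iV (u0t N) - u0" "u0 - iV v"]
        by (simp add: dist_norm norm_minus_commute)
      then have dl: "norm (iV (u0t N) - iV v) < \<eta>/2" using elim(2) yv by linarith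
      have "(norm (iV (u0t N) - iV v))^2 \<le> (\<eta>/2)^2"
        using dl by (intro power_mono) auto
      then have "(norm (iV (u N 1) - iV (u0t N)))^2 < \<eta>^2"
        using elim(1) elim(3) \<eta> by (simp add: power_divide) (smt (verit) zero_less_power)
      then show ?case using \<eta> by (simp add: power2_less_imp_less)
    qed
  qed
qed

end
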